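(* Let $(A_n)_{n\in\mathbb N}$ be a sequence of invertible linear operators on $\mathbb R^d$ and $\|\cdot\|$ a norm on $\mathbb R^d$. The following are equivalent: (1) $(A_n)_{n\in\mathbb N}$ admits a nonuniform strong polynomial dichotomy; (2) there is a sequence of norms $(\|\cdot\|_n)_{n\in\mathbb N}$ on $\mathbb R^d$ such that $(A_n)_{n\in\mathbb N}$ admits a strong polynomial dichotomy with respect to $(\|\cdot\|_n)_{n\in\mathbb N}$ and there exist $C>0$, $\delta\ge0$ with $\|x\|\le\|x\|_n\le Cn^\delta\|x\|$ for all $x\in\mathbb R^d$, $n\in\mathbb N$.
   Context: $\mathbb N=\{1,2,\dots\}$. $\mathcal A(m,n)=A_{m-1}\cdots A_n$ ($m>n$), $\mathrm{Id}$ ($m=n$), $A_m^{-1}\cdots A_{n-1}^{-1}$ ($m<n$). Nonuniform strong polynomial dichotomy: there exist $K>0$, $a\ge\lambda>0$, $\varepsilon\ge0$ and projections $P_n$ with $A_nP_n=P_{n+1}A_n$ such that for all $m\ge n$ in $\mathbb N$, with $Q_m=\mathrm{Id}-P_m$: $\|\mathcal A(m,n)P_n\|\le K(m/n)^{-\lambda}n^\varepsilon$, $\|\mathcal A(n,m)Q_m\|\le K(m/n)^{-\lambda}m^\varepsilon$, $\|\mathcal A(m,n)\|\le K(m/n)^an^\varepsilon$, $\|\mathcal A(n,m)\|\le K(m/n)^am^\varepsilon$ (operator norms induced by $\|\cdot\|$). Strong polynomial dichotomy w.r.t. $(\|\cdot\|_n)$: there exist $K>0$, $a\ge\lambda>0$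 and projections $P_n$ with $A_nP_n=P_{n+1}A_n$ such that for $m\ge n$, $x\in\mathbb R^d$: $\|\mathcal A(m,n)P_nx\|_m\le K(m/n)^{-\lambda}\|x\|_n$, $\|\mathcal A(n,m)Q_mx\|_n\le K(m/n)^{-\lambda}\|x\|_m$, $\|\mathcal A(m,n)x\|_m\le K(m/n)^a\|x\|_n$, $\|\mathcal A(n,m)x\|_n\le K(m/n)^a\|x\|_m$. *)

theory Defs
  imports "HOL-Analysis.Analysis"
begin

definition is_norm :: "(real ^ 'd \<Rightarrow> real) \<Rightarrow> bool" where
  "is_norm N \<longleftrightarrow> (\<forall>x. 0 \<le> N x) \<and> (\<forall>x. N x = 0 \<longleftrightarrow> x = 0)
     \<and> (\<forall>c x. N (c *\<^sub>R x) = \<bar>c\<bar> * N x) \<and> (\<forall>x y. N (x + y) \<le> N x + N y)"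

definition op_norm :: "(real ^ 'd \<Rightarrow> real) \<Rightarrow> real ^ 'd ^ 'd \<Rightarrow> real" where
  "op_norm N T = (SUP x\<in>{x. N x \<le> 1}. N (T *v x))"

fun fwd :: "(nat \<Rightarrow> real ^ 'd ^ 'd) \<Rightarrow> nat \<Rightarrow> nat \<Rightarrow> real ^ 'd ^ 'd" where
  "fwd A n 0 = mat 1"
| "fwd A n (Suc k) = A (n + k) ** fwd A n k"

fun bwd :: "(nat \<Rightarrow> real ^ 'd ^ 'd) \<Rightarrow> nat \<Rightarrow> nat \<Rightarrow> real ^ 'd ^ 'd" where
  "bwd A m 0 = mat 1"
| "bwd A m (Suc k) = bwd A m k ** matrix_inv (A (m + k))"

definition cocycle :: "(nat \<Rightarrow> real ^ 'd ^ 'd) \<Rightarrow> nat \<Rightarrow> nat \<Rightarrow> real ^ 'd ^ 'd" where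
  "cocycle A m n = (if n \<le> m then fwd A n (m - n) else bwd A m (n - m))"

text \<open>Projections P_n (n \<in> \<nat> = {1,2,...}) compatible with the dynamics.\<close>
definition invariant_projections :: "(nat \<Rightarrow> real ^ 'd ^ 'd) \<Rightarrow> (nat \<Rightarrow> real ^ 'd ^ 'd) \<Rightarrow> bool" where
  "invariant_projections A P \<longleftrightarrow>
     (\<forall>n\<ge>1. P n ** P n = P n \<and> A n ** P n = P (Suc n) ** A n)"

definition nonuniform_strong_poly_dichotomy ::
  "(nat \<Rightarrow> real ^ 'd ^ 'd) \<Rightarrow> (real ^ 'd \<Rightarrow> real) \<Rightarrow> bool" where
  "nonuniform_strong_poly_dichotomy A N \<longleftrightarrow>
    (\<exists>K a lam eps P. K > 0 \<and> a \<ge> lam \<and> lam > 0 \<and> eps \<ge> 0 \<and> invariant_projections A P \<and>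
      (\<forall>m n. 1 \<le> n \<and> n \<le> m \<longrightarrow>
         op_norm N (cocycle A m n ** P n) \<le> K * (real m / real n) powr (-lam) * real n powr eps
       \<and> op_norm N (cocycle A n m ** (mat 1 - P m)) \<le> K * (real m / real n) powr (-lam) * real m powr eps
       \<and> op_norm N (cocycle A m n) \<le> K * (real m / real n) powr a * real n powr eps
       \<and> op_norm N (cocycle A n m) \<le> K * (real m / real n) powr a * real m powr eps))"

definition strong_poly_dichotomy_wrt ::
  "(nat \<Rightarrow> real ^ 'd ^ 'd) \<Rightarrow> (nat \<Rightarrow> real ^ 'd \<Rightarrow> real) \<Rightarrow> bool" where
  "strong_poly_dichotomy_wrt A Ns \<longleftrightarrow>
    (\<exists>K a lam P. K > 0 \<and> a \<ge> lam \<and> lam > 0 \<and> invariant_projections A P \<and>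
      (\<forall>m n x. 1 \<le> n \<and> n \<le> m \<longrightarrow>
         Ns m (cocycle A m n ** P n *v x) \<le> K * (real m / real n) powr (-lam) * Ns n x
       \<and> Ns n (cocycle A n m ** (mat 1 - P m) *v x) \<le> K * (real m / real n) powr (-lam) * Ns m x
       \<and> Ns m (cocycle A m n *v x) \<le> K * (real m / real n) powr a * Ns n x
       \<and> Ns n (cocycle A n m *v x) \<le> K * (real m / real n) powr a * Ns m x))"

end

theory Submission
  imports Defs
begin


lemma minv_right: "invertible (M::real^'n^'n) \<Longrightarrow> M ** matrix_inv M = mat 1"
  unfolding invertible_def matrix_inv_def by (rule someI_ex[THEN conjunct1])
lemma minv_left: "invertible (M::real^'n^'n) \<Longrightarrow> matrix_inv M ** M = mat 1"
  unfolding invertible_def matrix_inv_def by (rule someI_ex[THEN conjunct2])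

definition Gm :: "(nat \<Rightarrow> real ^ 'd ^ 'd) \<Rightarrow> nat \<Rightarrow> real ^ 'd ^ 'd" where
  "Gm A n = fwd A 1 (n - 1)"

lemma Gm_1[simp]: "Gm A (Suc 0) = mat 1" by (simp add: Gm_def)

lemma Gm_Suc: "n \<ge> 1 \<Longrightarrow> Gm A (Suc n) = A n ** Gm A n"
  by (cases n) (auto simp: Gm_def)

lemma Gm_inv: assumes "\<And>n. n \<ge> 1 \<Longrightarrow> invertible (A n)" "n \<ge> 1"
  shows "invertible (Gm A n)"
  using assms(2)
proof (induction n rule: dec_induct)
  case base then show ?case by (auto simp: invertible_def)
next
  case (step n) then show ?case using assms(1) by (simp add: Gm_Suc invertible_mult)
qed

lemma fwd_eq: assumes "\<And>n. n \<ge> 1 \<Longrightarrow> invertible (A n)" "n \<ge> 1"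
  shows "fwd A n k = Gm A (n+k) ** matrix_inv (Gm A n)"
proof (induction k)
  case 0 then show ?case using minv_right[OF Gm_inv[OF assms]] by simp
next
  case (Suc k)
  have "fwd A n (Suc k) = A (n+k) ** (Gm A (n+k) ** matrix_inv (Gm A n))" using Suc by simp
  also have "\<dots> = Gm A (n + Suc k) ** matrix_inv (Gm A n)"
    using assms(2) by (simp add: matrix_mul_assoc Gm_Suc)
  finally show ?case .
qed

lemma bwd_eq: assumes "\<And>n. n \<ge> 1 \<Longrightarrow> invertible (A n)" "m \<ge> 1"
  shows "bwd A m k = Gm A m ** matrix_inv (Gm A (m+k))"
proof -
  have key: "bwd A m k ** Gm A (m+k) = Gm A m" for k
  proof (induction k)
    case 0 then show ?case by simp
  next
    case (Suc k)
    have "bwd A m (Suc k) ** Gm A (m + Suc k) = bwd A m k ** (matrix_inv (A (m+k)) ** A (m+k)) ** Gm A (m+k)"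
      using assms(2) by (simp add: Gm_Suc matrix_mul_assoc)
    also have "\<dots> = Gm A m" using minv_left[OF assms(1)[of "m+k"]] assms(2) Suc by simp
    finally show ?case .
  qed
  have "bwd A m k = bwd A m k ** (Gm A (m+k) ** matrix_inv (Gm A (m+k)))"
    using minv_right[OF Gm_inv[OF assms(1), where n="m+k"]] assms(2) by simp
  also have "\<dots> = Gm A m ** matrix_inv (Gm A (m+k))" by (simp add: matrix_mul_assoc key)
  finally show ?thesis .
qed

lemma cocycle_eq: assumes "\<And>n. n \<ge> 1 \<Longrightarrow> invertible (A n)" "m \<ge> 1" "n \<ge> 1"
  shows "cocycle A m n = Gm A m ** matrix_inv (Gm A n)"
  using fwd_eq[OF assms(1,3), where k="m-n"] bwd_eq[OF assms(1,2), where k="n-m"]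
  by (auto simp: cocycle_def)

lemma cocycle_comp: assumes "\<And>n. n \<ge> 1 \<Longrightarrow> invertible (A n)" "k \<ge> 1" "m \<ge> 1" "n \<ge> 1"
  shows "cocycle A k m ** cocycle A m n = cocycle A k n"
proof -
  have "cocycle A k m ** cocycle A m n = Gm A k ** (matrix_inv (Gm A m) ** Gm A m) ** matrix_inv (Gm A n)"
    using assms by (simp add: cocycle_eq matrix_mul_assoc)
  then show ?thesis using minv_left[OF Gm_inv[OF assms(1,3)]] assms by (simp add: cocycle_eq)
qed

lemma cocycle_id: "cocycle A n n = mat 1" by (simp add: cocycle_def)

lemma P_eq: assumes "\<And>n. n \<ge> 1 \<Longrightarrow> invertible (A n)" "invariant_projections A P" "n \<ge> 1"
  shows "P n ** Gm A n = Gm A n ** P 1"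
  using assms(3)
proof (induction n rule: dec_induct)
  case base then show ?case by simp
next
  case (step n)
  have "P (Suc n) ** Gm A (Suc n) = (P (Suc n) ** A n) ** Gm A n"
    using step by (simp add: Gm_Suc matrix_mul_assoc)
  also have "\<dots> = (A n ** P n) ** Gm A n"
    using assms(2) step unfolding invariant_projections_def by simp
  also have "\<dots> = A n ** (P n ** Gm A n)" by (simp add: matrix_mul_assoc)
  also have "\<dots> = Gm A (Suc n) ** P 1" using step by (simp add: Gm_Suc matrix_mul_assoc)
  finally show ?case .
qed

lemma P_cocycle: assumes "\<And>n. n \<ge> 1 \<Longrightarrow> invertible (A n)" "invariant_projections A P" "m \<ge> 1" "n \<ge> 1"
  shows "P m ** cocycle A m n = cocycle A m n ** P n"
proof -
  have e: "P k = Gm A k ** P 1 ** matrix_inv (Gm A k)" if "k \<ge> 1" for k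
  proof -
    have "P k = P k ** Gm A k ** matrix_inv (Gm A k)"
      using minv_right[OF Gm_inv[OF assms(1) that]] by (simp add: matrix_mul_assoc[symmetric])
    then show ?thesis using P_eq[OF assms(1,2) that] by simp
  qed
  have "P m ** cocycle A m n = Gm A m ** P 1 ** (matrix_inv (Gm A m) ** Gm A m) ** matrix_inv (Gm A n)"
    using assms by (simp add: cocycle_eq e[of m] matrix_mul_assoc)
  also have "\<dots> = Gm A m ** P 1 ** matrix_inv (Gm A n)"
    using minv_left[OF Gm_inv[OF assms(1,3)]] by simp
  also have "\<dots> = cocycle A m n ** P n"
  proof -
    have "cocycle A m n ** P n = Gm A m ** (matrix_inv (Gm A n) ** Gm A n) ** P 1 ** matrix_inv (Gm A n)"
      using assms by (simp add: cocycle_eq e[of n] matrix_mul_assoc)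
    then show ?thesis using minv_left[OF Gm_inv[OF assms(1,4)]] by simp
  qed
  finally show ?thesis .
qed


lemma isn_0: "is_norm N \<Longrightarrow> N 0 = 0" unfolding is_norm_def by auto
lemma isn_nonneg: "is_norm N \<Longrightarrow> 0 \<le> N x" unfolding is_norm_def by auto
lemma isn_scale: "is_norm N \<Longrightarrow> N (c *\<^sub>R x) = \<bar>c\<bar> * N x" unfolding is_norm_def by auto
lemma isn_tri: "is_norm N \<Longrightarrow> N (x + y) \<le> N x + N y" unfolding is_norm_def by auto
lemma isn_eq0: "is_norm N \<Longrightarrow> N x = 0 \<longleftrightarrow> x = 0" unfolding is_norm_def by auto
lemma isn_minus: "is_norm N \<Longrightarrow> N (- x) = N x"
  using isn_scale[of N "-1" x] by simp
lemma isn_diff: "is_norm N \<Longrightarrow> N (x - y) \<le> N x + N y"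
  using isn_tri[of N x "-y"] isn_minus[of N y] by simp
lemma isn_rev: "is_norm N \<Longrightarrow> N x \<le> N (x - y) + N y"
  using isn_tri[of N "x - y" y] by simp

lemma isn_sum: "is_norm N \<Longrightarrow> N (sum f S) \<le> sum (\<lambda>i. N (f i)) S"
proof (induction S rule: infinite_finite_induct)
  case (infinite A) then show ?case by (simp add: isn_0)
next
  case empty then show ?case by (simp add: isn_0)
next
  case (insert x F) then show ?case using isn_tri[of N "f x" "sum f F"] by simp
qed

lemma isn_upper: assumes "is_norm (N :: real^'d \<Rightarrow> real)"
  shows "\<exists>C>0. \<forall>x. N x \<le> C * norm x"
proof -
  define C where "C = 1 + (\<Sum>i\<in>UNIV. N (axis i (1::real)))"
  have C0: "C > 0" unfolding C_def using isn_nonneg[OF assms] by (simp add: add_pos_nonneg sum_nonneg)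
  have "N x \<le> C * norm x" for x
  proof -
    have "N x = N (\<Sum>i\<in>UNIV. (x$i) *\<^sub>R axis i 1)"
      using basis_expansion[of x] by (simp add: scalar_mult_eq_scaleR)
    also have "\<dots> \<le> (\<Sum>i\<in>UNIV. N ((x$i) *\<^sub>R axis i 1))" by (rule isn_sum[OF assms])
    also have "\<dots> = (\<Sum>i\<in>UNIV. \<bar>x$i\<bar> * N (axis i 1))" by (simp add: isn_scale[OF assms])
    also have "\<dots> \<le> (\<Sum>i\<in>UNIV. norm x * N (axis i 1))"
      by (rule sum_mono, rule mult_right_mono[OF component_le_norm_cart isn_nonneg[OF assms]])
    also have "\<dots> \<le> C * norm x" unfolding C_def by (simp add: sum_distrib_left[symmetric] algebra_simps)
    finally show ?thesis .
  qed
  then show ?thesis using C0 by blast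
qed

lemma isn_lower: assumes "is_norm (N :: real^'d \<Rightarrow> real)"
  shows "\<exists>c>0. \<forall>x. c * norm x \<le> N x"
proof -
  obtain C where C: "C > 0" "\<And>x. N x \<le> C * norm x" using isn_upper[OF assms] by blast
  have lip: "\<bar>N x - N y\<bar> \<le> C * norm (x - y)" for x y
  proof -
    have "N x \<le> N (x - y) + N y" by (rule isn_rev[OF assms])
    moreover have "N y \<le> N (y - x) + N x" by (rule isn_rev[OF assms])
    moreover have "N (y - x) = N (x - y)" using isn_minus[OF assms, of "x - y"] by simp
    ultimately show ?thesis using C(2)[of "x - y"] by linarith
  qed
  have cont: "continuous_on UNIV N"
    unfolding continuous_on_iff
  proof (intro ballI allI impI)
    fix x and e :: real assume "e > 0"
    show "\<exists>d>0. \<forall>x'\<in>UNIV. dist x' x < d \<longrightarrow> dist (N x') (N x) < e"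
    proof (intro exI[of _ "e / C"] conjI ballI impI)
      show "e / C > 0" using \<open>e > 0\<close> C by simp
      fix x' assume "dist x' x < e / C"
      then have "C * norm (x' - x) < e" using C by (simp add: dist_norm field_simps)
      then show "dist (N x') (N x) < e" using lip[of x' x] by (simp add: dist_real_def)
    qed
  qed
  have ne: "sphere (0::real^'d) 1 \<noteq> {}" by simp
  obtain x0 where x0: "x0 \<in> sphere 0 1" "\<And>y. y \<in> sphere 0 1 \<Longrightarrow> N x0 \<le> N y"
    using continuous_attains_inf[OF compact_sphere ne continuous_on_subset[OF cont]] by blast
  have c0: "N x0 > 0" using x0(1) isn_eq0[OF assms, of x0] isn_nonneg[OF assms, of x0] by force
  have "N x0 * norm x \<le> N x" for x
  proof (cases "x = 0")
    case True then show ?thesis by (simp add: isn_0[OF assms])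
  next
    case False
    have "N x0 \<le> N ((1 / norm x) *\<^sub>R x)" using x0(2) False by (simp add: norm_sgn)
    also have "\<dots> = N x / norm x" using isn_scale[OF assms] by simp
    finally show ?thesis using False by (simp add: field_simps)
  qed
  then show ?thesis using c0 by blast
qed

lemma op_norm_bound: assumes "is_norm (N :: real^'d \<Rightarrow> real)"
  shows "N (T *v x) \<le> op_norm N T * N x"
proof -
  obtain C where C: "C > 0" "\<And>x. N x \<le> C * norm x" using isn_upper[OF assms] by blast
  obtain c where c: "c > 0" "\<And>x. c * norm x \<le> N x" using isn_lower[OF assms] by blast
  obtain B where B: "B > 0" "\<And>x. norm (T *v x) \<le> norm x * B"
    using bounded_linear.pos_bounded[OF matrix_vector_mul_bounded_linear[of T]] by blast
  have bdd: "bdd_above ((\<lambda>y. N (T *v y)) ` {y. N y \<le> 1})"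
  proof (rule bdd_aboveI2)
    fix y assume "y \<in> {y. N y \<le> 1}"
    then have "c * norm y \<le> 1" using c(2)[of y] by simp
    then have ny: "norm y \<le> 1 / c" using c(1) by (simp add: field_simps)
    have "norm (T *v y) \<le> norm y * B" by (rule B(2))
    also have "\<dots> \<le> (1 / c) * B" using ny B(1) by (intro mult_right_mono) auto
    finally have "C * norm (T *v y) \<le> C * ((1 / c) * B)" using C(1) by (intro mult_left_mono) auto
    then show "N (T *v y) \<le> C * ((1 / c) * B)" using C(2)[of "T *v y"] by linarith
  qed
  show ?thesis
  proof (cases "x = 0")
    case True then show ?thesis by (simp add: isn_0[OF assms])
  next
    case False
    then have nx: "N x > 0" using isn_eq0[OF assms, of x] isn_nonneg[OF assms, of x] by force
    define y where "y = (1 / N x) *\<^sub>R x"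
    have "N y = 1" unfolding y_def using nx isn_scale[OF assms] by simp
    then have "N (T *v y) \<le> op_norm N T" unfolding op_norm_def by (intro cSUP_upper[OF _ bdd]) auto
    moreover have "N (T *v y) = N (T *v x) / N x"
      unfolding y_def using nx by (simp add: matrix_vector_mult_scaleR isn_scale[OF assms])
    ultimately show ?thesis using nx by (simp add: field_simps)
  qed
qed

lemma op_norm_le: assumes "is_norm (N :: real^'d \<Rightarrow> real)" "B \<ge> 0" "\<And>x. N (T *v x) \<le> B * N x"
  shows "op_norm N T \<le> B"
  unfolding op_norm_def
proof (rule cSUP_least)
  have "0 \<in> {x. N x \<le> 1}" using isn_0[OF assms(1)] by simp
  then show "{x. N x \<le> 1} \<noteq> {}" by blast
  fix x assume "x \<in> {x. N x \<le> 1}"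
  then have "B * N x \<le> B * 1" using assms(2) by (intro mult_left_mono) auto
  then show "N (T *v x) \<le> B" using assms(3)[of x] by linarith
qed


definition Rr :: "real \<Rightarrow> real \<Rightarrow> real" where "Rr x y = max (x / y) (y / x)"
lemma Rr_sym: "Rr x y = Rr y x" unfolding Rr_def by simp

lemma Rr_ge1: "0 < x \<Longrightarrow> 0 < y \<Longrightarrow> 1 \<le> Rr x y"
proof -
  assume a: "0 < x" "0 < y"
  show ?thesis
  proof (cases "x \<le> y")
    case True then have "1 \<le> y / x" using a by simp
    then show ?thesis unfolding Rr_def by linarith
  next
    case False then have "1 \<le> x / y" using a by simp
    then show ?thesis unfolding Rr_def by linarith
  qed
qed
lemma Rr_pos: "0 < x \<Longrightarrow> 0 < y \<Longrightarrow> 0 < Rr x y"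
  using Rr_ge1 by fastforce
lemma Rr_le: "0 < x \<Longrightarrow> x \<le> y \<Longrightarrow> Rr x y = y / x"
proof -
  assume a: "0 < x" "x \<le> y"
  then have "x / y \<le> 1" "1 \<le> y / x" by auto
  then show ?thesis unfolding Rr_def by (simp add: max_def)
qed
lemma Rr_ge: "0 < y \<Longrightarrow> y \<le> x \<Longrightarrow> Rr x y = x / y"
  using Rr_le[of y x] Rr_sym[of x y] by simp

lemma Rr_tri: assumes "0 < x" "0 < y" "0 < z" shows "Rr x z \<le> Rr x y * Rr y z"
proof -
  have r: "x / y \<le> Rr x y" "y / x \<le> Rr x y" "y / z \<le> Rr y z" "z / y \<le> Rr y z"
    unfolding Rr_def by auto
  have p: "0 < x / y" "0 < y / x" "0 < y / z" "0 < z / y" using assms by auto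
  have "x / z = (x / y) * (y / z)" using assms by (simp add: field_simps)
  also have "\<dots> \<le> Rr x y * Rr y z" using r p by (intro mult_mono) auto
  finally have 1: "x / z \<le> Rr x y * Rr y z" .
  have "z / x = (y / x) * (z / y)" using assms by (simp add: field_simps)
  also have "\<dots> \<le> Rr x y * Rr y z" using r p by (intro mult_mono) auto
  finally have 2: "z / x \<le> Rr x y * Rr y z" .
  show ?thesis using 1 2 unfolding Rr_def by simp
qed

lemma powr_split: "0 < (x::real) \<Longrightarrow> 0 < y \<Longrightarrow> 0 < z \<Longrightarrow> (x / z) powr p = (x / y) powr p * (y / z) powr p"
proof -
  assume a: "0 < x" "0 < y" "0 < z"
  then have "x / z = (x / y) * (y / z)" by (simp add: field_simps)
  then have "(x / z) powr p = ((x / y) * (y / z)) powr p" using a by simp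
  also have "\<dots> = (x / y) powr p * (y / z) powr p" using a by (intro powr_mult; simp)
  finally show ?thesis .
qed

lemma powr_flip: "0 < (x::real) \<Longrightarrow> 0 < y \<Longrightarrow> (x / y) powr (- p) = (y / x) powr p"
  by (simp add: divide_powr_uminus powr_divide)

lemma powr_le1: "0 < (x::real) \<Longrightarrow> x \<le> y \<Longrightarrow> 0 \<le> p \<Longrightarrow> (x / y) powr p \<le> 1"
  using powr_mono2[of p "x/y" 1] by simp

lemma powr_ge1: "0 < (x::real) \<Longrightarrow> x \<le> y \<Longrightarrow> 0 \<le> p \<Longrightarrow> 1 \<le> (y / x) powr p"
  by (simp add: ge_one_powr_ge_zero)

lemma powr_neg_le1: "0 < (x::real) \<Longrightarrow> x \<le> y \<Longrightarrow> 0 \<le> p \<Longrightarrow> (y / x) powr (- p) \<le> 1"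
  by (simp add: powr_flip powr_le1)

lemma powr_exp_mono: "1 \<le> (u::real) \<Longrightarrow> p \<le> q \<Longrightarrow> u powr p \<le> u powr q"
  by (rule powr_mono)

lemma powr_base_mono: "0 \<le> (u::real) \<Longrightarrow> u \<le> v \<Longrightarrow> 0 \<le> p \<Longrightarrow> u powr p \<le> v powr p"
  by (rule powr_mono2)

lemma Rr_powr_ge1: "0 < (x::real) \<Longrightarrow> 0 < y \<Longrightarrow> 0 \<le> p \<Longrightarrow> 1 \<le> Rr x y powr p"
  using Rr_ge1 ge_one_powr_ge_zero by blast
lemma Rr_powr_neg_le1: "0 < (x::real) \<Longrightarrow> 0 < y \<Longrightarrow> 0 \<le> p \<Longrightarrow> Rr x y powr (- p) \<le> 1"
proof -
  assume a: "0 < x" "0 < y" "0 \<le> p"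
  have "1 \<le> Rr x y powr p" using Rr_powr_ge1[OF a] .
  then show ?thesis by (simp add: powr_minus inverse_le_1_iff)
qed


lemma pinv: "0 < (u::real) \<Longrightarrow> u powr (- p) * u powr p = 1"
  by (simp add: powr_minus)
lemma pinv': "0 < (u::real) \<Longrightarrow> u powr p * u powr (- p) = 1"
  by (simp add: powr_minus)
lemma ratio_ge1: "0 < (x::real) \<Longrightarrow> x \<le> y \<Longrightarrow> 1 \<le> y / x" by simp

lemma powr_al: "0 < (x::real) \<Longrightarrow> x \<le> y \<Longrightarrow> l \<le> a \<Longrightarrow> (y / x) powr (- a) \<le> (y / x) powr (- l)"
  by (intro powr_exp_mono) auto
lemma powr_al': "0 < (x::real) \<Longrightarrow> x \<le> y \<Longrightarrow> l \<le> a \<Longrightarrow> (y / x) powr l \<le> (y / x) powr a"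
  by (intro powr_exp_mono) auto

lemma chn: "(X::real) \<le> S * u \<Longrightarrow> u * w \<le> v \<Longrightarrow> 0 \<le> S \<Longrightarrow> 0 \<le> w \<Longrightarrow> X * w \<le> S * v"
proof -
  assume a: "X \<le> S * u" "u * w \<le> v" "0 \<le> S" "0 \<le> w"
  have "X * w \<le> S * u * w" using a by (intro mult_right_mono) auto
  also have "\<dots> = S * (u * w)" by simp
  also have "\<dots> \<le> S * v" using a by (intro mult_left_mono) auto
  finally show ?thesis .
qed

lemma extr: "0 < (u::real) \<Longrightarrow> X * u powr p \<le> S \<Longrightarrow> X \<le> S * u powr (- p)"
proof -
  assume a: "0 < u" "X * u powr p \<le> S"
  have "X = X * u powr p * u powr (- p)" using pinv'[OF a(1), of p] by (simp add: mult.assoc)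
  also have "\<dots> \<le> S * u powr (- p)" using a by (intro mult_right_mono) auto
  finally show ?thesis .
qed

lemma le1mul: "0 \<le> (x::real) \<Longrightarrow> x \<le> z \<Longrightarrow> 0 \<le> y \<Longrightarrow> y \<le> 1 \<Longrightarrow> x * y \<le> z"
  by (metis mult_left_le order_trans)
lemma le1mul': "0 \<le> (x::real) \<Longrightarrow> x \<le> z \<Longrightarrow> 0 \<le> y \<Longrightarrow> y \<le> 1 \<Longrightarrow> y * x \<le> z"
  by (metis mult_left_le order_trans mult.commute)

context
  fixes l a :: real assumes l: "0 < l" and al: "l \<le> a"
begin

lemma sA: "0 < n \<Longrightarrow> n \<le> m \<Longrightarrow> m \<le> k \<Longrightarrow> (k / n) powr (- l) * (k / m) powr l \<le> (m / n) powr (- l)"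
proof -
  assume a: "0 < n" "n \<le> m" "m \<le> k"
  have "(k / n) powr (- l) = (k / m) powr (- l) * (m / n) powr (- l)" using a by (intro powr_split) auto
  then have "(k / n) powr (- l) * (k / m) powr l = ((k / m) powr (- l) * (k / m) powr l) * (m / n) powr (- l)" by simp
  also have "\<dots> = (m / n) powr (- l)" using a by (simp add: pinv)
  finally show ?thesis by simp
qed

lemma sB: "0 < n \<Longrightarrow> n \<le> m \<Longrightarrow> m \<le> k \<Longrightarrow> (k / n) powr (- l) * Rr k m powr (- a) \<le> (m / n) powr (- l)"
proof -
  assume a: "0 < n" "n \<le> m" "m \<le> k"
  have "(k / n) powr (- l) = (k / m) powr (- l) * (m / n) powr (- l)" using a by (intro powr_split) auto
  also have "\<dots> \<le> (m / n) powr (- l)"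
    using powr_neg_le1[of m k l] a l by (intro mult_left_le_one_le) auto
  finally have 1: "(k / n) powr (- l) \<le> (m / n) powr (- l)" .
  have 2: "Rr k m powr (- a) \<le> 1" using a l al by (intro Rr_powr_neg_le1) auto
  show ?thesis using 1 2 by (intro le1mul) auto
qed

lemma sC: "0 < n \<Longrightarrow> n \<le> k \<Longrightarrow> k \<le> m \<Longrightarrow> (k / n) powr (- l) * Rr k m powr (- a) \<le> (m / n) powr (- l)"
proof -
  assume a: "0 < n" "n \<le> k" "k \<le> m"
  have r: "Rr k m = m / k" using a by (intro Rr_le) auto
  have "(k / n) powr (- l) * Rr k m powr (- a) \<le> (k / n) powr (- l) * (m / k) powr (- l)"
    unfolding r using a al by (intro mult_left_mono powr_al) auto
  also have "\<dots> = (m / n) powr (- l)" using a powr_split[of m k n "- l"] by simp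
  finally show ?thesis .
qed

lemma sD: "0 < k \<Longrightarrow> k \<le> n \<Longrightarrow> n \<le> m \<Longrightarrow> Rr k n powr a * Rr k m powr (- a) \<le> (m / n) powr (- l)"
proof -
  assume a: "0 < k" "k \<le> n" "n \<le> m"
  have r: "Rr k n = n / k" "Rr k m = m / k" using a by (auto intro!: Rr_le)
  have "(m / k) powr (- a) = (m / n) powr (- a) * (n / k) powr (- a)" using a by (intro powr_split) auto
  then have "Rr k n powr a * Rr k m powr (- a) = (m / n) powr (- a) * ((n / k) powr a * (n / k) powr (- a))"
    unfolding r by simp
  also have "\<dots> = (m / n) powr (- a)" using a by (simp add: pinv')
  also have "\<dots> \<le> (m / n) powr (- l)" using a al by (intro powr_al) auto
  finally show ?thesis .
qed

lemma sE: "0 < k \<Longrightarrow> k \<le> n \<Longrightarrow> n \<le> m \<Longrightarrow> (m / k) powr (- l) * (n / k) powr l \<le> (m / n) powr (- l)"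
proof -
  assume a: "0 < k" "k \<le> n" "n \<le> m"
  have "(m / k) powr (- l) = (m / n) powr (- l) * (n / k) powr (- l)" using a by (intro powr_split) auto
  then have "(m / k) powr (- l) * (n / k) powr l = (m / n) powr (- l) * ((n / k) powr (- l) * (n / k) powr l)" by simp
  also have "\<dots> = (m / n) powr (- l)" using a by (simp add: pinv)
  finally show ?thesis by simp
qed

lemma sF: "0 < k \<Longrightarrow> k \<le> n \<Longrightarrow> n \<le> m \<Longrightarrow> (m / k) powr (- l) * Rr k n powr (- a) \<le> (m / n) powr (- l)"
proof -
  assume a: "0 < k" "k \<le> n" "n \<le> m"
  have "(m / k) powr (- l) = (m / n) powr (- l) * (n / k) powr (- l)" using a by (intro powr_split) auto
  also have "\<dots> \<le> (m / n) powr (- l)"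
    using powr_neg_le1[of k n l] a l by (intro le1mul) auto
  finally have 1: "(m / k) powr (- l) \<le> (m / n) powr (- l)" .
  have 2: "Rr k n powr (- a) \<le> 1" using a l al by (intro Rr_powr_neg_le1) auto
  show ?thesis using 1 2 by (intro le1mul) auto
qed

lemma sG: "0 < n \<Longrightarrow> n \<le> k \<Longrightarrow> k \<le> m \<Longrightarrow> (m / k) powr (- l) * Rr k n powr (- a) \<le> (m / n) powr (- l)"
proof -
  assume a: "0 < n" "n \<le> k" "k \<le> m"
  have r: "Rr k n = k / n" using a by (intro Rr_ge) auto
  have "(m / k) powr (- l) * Rr k n powr (- a) \<le> (m / k) powr (- l) * (k / n) powr (- l)"
    unfolding r using a al by (intro mult_left_mono powr_al) auto
  also have "\<dots> = (m / n) powr (- l)" using a powr_split[of m k n "- l"] by simp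
  finally show ?thesis .
qed

lemma sH: "0 < n \<Longrightarrow> n \<le> m \<Longrightarrow> m \<le> k \<Longrightarrow> Rr k m powr a * Rr k n powr (- a) \<le> (m / n) powr (- l)"
proof -
  assume a: "0 < n" "n \<le> m" "m \<le> k"
  have r: "Rr k m = k / m" "Rr k n = k / n" using a by (auto intro!: Rr_ge)
  have "(k / n) powr (- a) = (k / m) powr (- a) * (m / n) powr (- a)" using a by (intro powr_split) auto
  then have "Rr k m powr a * Rr k n powr (- a) = ((k / m) powr a * (k / m) powr (- a)) * (m / n) powr (- a)"
    unfolding r by simp
  also have "\<dots> = (m / n) powr (- a)" using a by (simp add: pinv')
  also have "\<dots> \<le> (m / n) powr (- l)" using a al by (intro powr_al) auto
  finally show ?thesis .
qed

lemma neg_le_pos: "0 < n \<Longrightarrow> n \<le> m \<Longrightarrow> (m / n) powr (- l) \<le> (m / n) powr a"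
proof -
  assume a: "0 < n" "n \<le> m"
  have "(m / n) powr (- l) \<le> 1" using a l by (intro powr_neg_le1) auto
  also have "1 \<le> (m / n) powr a" using a l al by (intro powr_ge1) auto
  finally show ?thesis .
qed

lemma sI: "0 < n \<Longrightarrow> n \<le> m \<Longrightarrow> m \<le> k \<Longrightarrow> (k / n) powr (- l) * (k / m) powr l \<le> (m / n) powr a"
  using sA neg_le_pos order_trans by blast

lemma sO: "0 < k \<Longrightarrow> k \<le> n \<Longrightarrow> n \<le> m \<Longrightarrow> (m / k) powr (- l) * (n / k) powr l \<le> (m / n) powr a"
proof -
  assume a: "0 < k" "k \<le> n" "n \<le> m"
  then show ?thesis using sE[OF a] neg_le_pos[of n m] by simp
qed

lemma sJ: "0 < k \<Longrightarrow> k \<le> n \<Longrightarrow> n \<le> m \<Longrightarrow> (n / k) powr (- l) * (m / k) powr l \<le> (m / n) powr a"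
proof -
  assume a: "0 < k" "k \<le> n" "n \<le> m"
  have "(m / k) powr l = (m / n) powr l * (n / k) powr l" using a by (intro powr_split) auto
  then have "(n / k) powr (- l) * (m / k) powr l = (m / n) powr l * ((n / k) powr (- l) * (n / k) powr l)" by simp
  also have "\<dots> = (m / n) powr l" using a by (simp add: pinv)
  also have "\<dots> \<le> (m / n) powr a" using a al by (intro powr_al') auto
  finally show ?thesis .
qed

lemma sK: "0 < n \<Longrightarrow> n \<le> k \<Longrightarrow> k \<le> m \<Longrightarrow> Rr k n powr a * (m / k) powr l \<le> (m / n) powr a"
proof -
  assume a: "0 < n" "n \<le> k" "k \<le> m"
  have r: "Rr k n = k / n" using a by (intro Rr_ge) auto
  have "Rr k n powr a * (m / k) powr l \<le> (k / n) powr a * (m / k) powr a"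
    unfolding r using a al by (intro mult_left_mono powr_al') auto
  also have "\<dots> = (m / n) powr a" using a powr_split[of m k n a] by simp
  finally show ?thesis .
qed

lemma sM: "0 < n \<Longrightarrow> n \<le> m \<Longrightarrow> m \<le> k \<Longrightarrow> (k / m) powr (- l) * (k / n) powr l \<le> (m / n) powr a"
proof -
  assume a: "0 < n" "n \<le> m" "m \<le> k"
  have "(k / n) powr l = (k / m) powr l * (m / n) powr l" using a by (intro powr_split) auto
  then have "(k / m) powr (- l) * (k / n) powr l = ((k / m) powr (- l) * (k / m) powr l) * (m / n) powr l" by simp
  also have "\<dots> = (m / n) powr l" using a by (simp add: pinv)
  also have "\<dots> \<le> (m / n) powr a" using a al by (intro powr_al') auto
  finally show ?thesis .
qed

lemma sN: "0 < n \<Longrightarrow> n \<le> k \<Longrightarrow> k \<le> m \<Longrightarrow> Rr k m powr a * (k / n) powr l \<le> (m / n) powr a"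
proof -
  assume a: "0 < n" "n \<le> k" "k \<le> m"
  have r: "Rr k m = m / k" using a by (intro Rr_le) auto
  have "Rr k m powr a * (k / n) powr l \<le> (m / k) powr a * (k / n) powr a"
    unfolding r using a al by (intro mult_left_mono powr_al') auto
  also have "\<dots> = (m / n) powr a" using a powr_split[of m k n a] by simp
  finally show ?thesis .
qed

lemma sL: "0 < k \<Longrightarrow> 0 < x \<Longrightarrow> 0 < y \<Longrightarrow> Rr k x powr a * Rr k y powr (- a) \<le> Rr y x powr a"
proof -
  assume a: "0 < k" "0 < x" "0 < y"
  have "Rr k x powr a \<le> (Rr k y * Rr y x) powr a"
    using a l al Rr_tri[of k y x] Rr_pos[of k x] by (intro powr_base_mono) auto
  also have "\<dots> = Rr k y powr a * Rr y x powr a" using a Rr_pos by (intro powr_mult; simp)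
  finally have "Rr k x powr a * Rr k y powr (- a) \<le> Rr k y powr a * Rr y x powr a * Rr k y powr (- a)"
    by (intro mult_right_mono) auto
  also have "\<dots> = Rr y x powr a" using pinv'[of "Rr k y" a] Rr_pos[of k y] a by (simp add: algebra_simps)
  finally show ?thesis .
qed

lemma small_le_Rr: "0 < x \<Longrightarrow> x \<le> y \<Longrightarrow> 0 < k \<Longrightarrow> 0 < n \<Longrightarrow> (y / x) powr (- l) \<le> Rr k n powr a"
proof -
  assume a: "0 < x" "x \<le> y" "0 < k" "0 < n"
  have "(y / x) powr (- l) \<le> 1" using a l by (intro powr_neg_le1) auto
  also have "1 \<le> Rr k n powr a" using a l al by (intro Rr_powr_ge1) auto
  finally show ?thesis .
qed

end


locale nsd =
  fixes A :: "nat \<Rightarrow> real ^ 'd ^ 'd" and N :: "real ^ 'd \<Rightarrow> real" and P :: "nat \<Rightarrow> real ^ 'd ^ 'd"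
    and K a lam eps :: real
  assumes inv: "\<And>n. n \<ge> 1 \<Longrightarrow> invertible (A n)" and isn: "is_norm N"
    and IP: "invariant_projections A P"
    and K: "K > 0" and al: "lam \<le> a" and lam: "0 < lam" and eps: "0 \<le> eps"
    and H: "\<And>m n. 1 \<le> n \<Longrightarrow> n \<le> m \<Longrightarrow>
         op_norm N (cocycle A m n ** P n) \<le> K * (real m / real n) powr (-lam) * real n powr eps
       \<and> op_norm N (cocycle A n m ** (mat 1 - P m)) \<le> K * (real m / real n) powr (-lam) * real m powr eps
       \<and> op_norm N (cocycle A m n) \<le> K * (real m / real n) powr a * real n powr eps
       \<and> op_norm N (cocycle A n m) \<le> K * (real m / real n) powr a * real m powr eps"
begin

abbreviation F where "F k n \<equiv> cocycle A k n"
definition qv where "qv n x = x - P n *v x"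

definition h where
 "h n x k = (if n \<le> k then N (F k n *v (P n *v x)) * (real k / real n) powr lam else 0)
   + (if k \<le> n then N (F k n *v qv n x) * (real n / real k) powr lam else 0)
   + N (F k n *v x) * Rr (real k) (real n) powr (- a)"

definition Ns where "Ns n x = (SUP k\<in>{1..}. h n x k)"

lemma Nnn: "0 \<le> N x" by (rule isn_nonneg[OF isn])

lemma opb: "op_norm N T \<le> B \<Longrightarrow> N (T *v x) \<le> B * N x"
  using op_norm_bound[OF isn, of T x] mult_right_mono[of "op_norm N T" B "N x"] Nnn by auto

lemma bP: "1 \<le> n \<Longrightarrow> n \<le> k \<Longrightarrow>
   N (F k n *v (P n *v x)) \<le> K * (real k / real n) powr (-lam) * real n powr eps * N x"
  using opb[of "F k n ** P n" _ x] H[of n k] by (simp add: matrix_vector_mul_assoc)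

lemma bQ: "1 \<le> k \<Longrightarrow> k \<le> n \<Longrightarrow>
   N (F k n *v qv n x) \<le> K * (real n / real k) powr (-lam) * real n powr eps * N x"
proof -
  assume a: "1 \<le> k" "k \<le> n"
  have e: "F k n *v qv n x = (F k n ** (mat 1 - P n)) *v x"
    unfolding qv_def by (simp add: matrix_vector_mul_assoc[symmetric] matrix_vector_mult_diff_rdistrib matrix_vector_mult_diff_distrib)
  show ?thesis unfolding e using opb[of "F k n ** (mat 1 - P n)" _ x] H[of k n] a by simp
qed

lemma bG: "1 \<le> n \<Longrightarrow> 1 \<le> k \<Longrightarrow>
   N (F k n *v x) \<le> K * Rr (real k) (real n) powr a * real n powr eps * N x"
proof (cases "n \<le> k")
  case True
  assume a: "1 \<le> n" "1 \<le> k"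
  have "Rr (real k) (real n) = real k / real n" using a True by (intro Rr_ge) auto
  then show ?thesis using opb[of "F k n" _ x] H[of n k] a True by simp
next
  case False
  assume a: "1 \<le> n" "1 \<le> k"
  have "Rr (real k) (real n) = real n / real k" using a False by (intro Rr_le) auto
  then show ?thesis using opb[of "F k n" _ x] H[of k n] a False by simp
qed

lemma h_nonneg: "0 \<le> h n x k"
  unfolding h_def using Nnn by (auto intro!: add_nonneg_nonneg mult_nonneg_nonneg)

lemma h_bound: assumes "1 \<le> n" "1 \<le> k" shows "h n x k \<le> 3 * K * real n powr eps * N x"
proof -
  let ?B = "K * real n powr eps * N x"
  have B0: "0 \<le> ?B" using K Nnn by simp
  have t1: "(if n \<le> k then N (F k n *v (P n *v x)) * (real k / real n) powr lam else 0) \<le> ?B"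
  proof (cases "n \<le> k")
    case True
    have "N (F k n *v (P n *v x)) * (real k / real n) powr lam
       \<le> (K * (real k / real n) powr (-lam) * real n powr eps * N x) * (real k / real n) powr lam"
      using bP[OF assms(1) True] by (intro mult_right_mono) auto
    also have "\<dots> = ?B * ((real k / real n) powr (-lam) * (real k / real n) powr lam)" by (simp add: algebra_simps)
    also have "\<dots> = ?B" using assms by (simp add: pinv)
    finally show ?thesis using True by simp
  qed (use B0 in simp)
  have t2: "(if k \<le> n then N (F k n *v qv n x) * (real n / real k) powr lam else 0) \<le> ?B"
  proof (cases "k \<le> n")
    case True
    have "N (F k n *v qv n x) * (real n / real k) powr lam
       \<le> (K * (real n / real k) powr (-lam) * real n powr eps * N x) * (real n / real k) powr lam"
      using bQ[OF assms(2) True] by (intro mult_right_mono) auto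
    also have "\<dots> = ?B * ((real n / real k) powr (-lam) * (real n / real k) powr lam)" by (simp add: algebra_simps)
    also have "\<dots> = ?B" using assms by (simp add: pinv)
    finally show ?thesis using True by simp
  qed (use B0 in simp)
  have t3: "N (F k n *v x) * Rr (real k) (real n) powr (- a) \<le> ?B"
  proof -
    have "N (F k n *v x) * Rr (real k) (real n) powr (- a)
       \<le> (K * Rr (real k) (real n) powr a * real n powr eps * N x) * Rr (real k) (real n) powr (- a)"
      using bG[OF assms] by (intro mult_right_mono) auto
    also have "\<dots> = ?B * (Rr (real k) (real n) powr a * Rr (real k) (real n) powr (- a))" by (simp add: algebra_simps)
    also have "\<dots> = ?B" using assms Rr_pos[of "real k" "real n"] by (simp add: pinv')
    finally show ?thesis .
  qed
  show ?thesis using t1 t2 t3 unfolding h_def by linarith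
qed

lemma bdd: "1 \<le> n \<Longrightarrow> bdd_above ((h n x) ` {1..})"
  using h_bound by (intro bdd_aboveI2[where M="3 * K * real n powr eps * N x"]) auto

lemma h_le_Ns: "1 \<le> n \<Longrightarrow> 1 \<le> k \<Longrightarrow> h n x k \<le> Ns n x"
  unfolding Ns_def using bdd by (intro cSUP_upper) auto

lemma Ns_least: "(\<And>k. 1 \<le> k \<Longrightarrow> h n x k \<le> B) \<Longrightarrow> Ns n x \<le> B"
  unfolding Ns_def by (intro cSUP_least) auto

lemma Ns_upper: "1 \<le> n \<Longrightarrow> Ns n x \<le> 3 * K * real n powr eps * N x"
  using h_bound by (intro Ns_least) auto

lemma Ns_lower: assumes "1 \<le> n" shows "N x \<le> Ns n x"
proof -
  have "Rr (real n) (real n) = 1" using assms Rr_ge[of "real n" "real n"] by simp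
  then have "N x \<le> h n x n" unfolding h_def using Nnn by (simp add: cocycle_id)
  then show ?thesis using h_le_Ns[OF assms assms, of x] by linarith
qed


lemma V1: "1 \<le> k \<Longrightarrow> 1 \<le> m \<Longrightarrow> 1 \<le> n \<Longrightarrow> F k m *v (F m n *v x) = F k n *v x"
  by (simp add: matrix_vector_mul_assoc cocycle_comp[OF inv])
lemma V2: "1 \<le> m \<Longrightarrow> 1 \<le> n \<Longrightarrow> P m *v (F m n *v x) = F m n *v (P n *v x)"
  by (simp add: matrix_vector_mul_assoc P_cocycle[OF inv IP])
lemma V3: "1 \<le> n \<Longrightarrow> P n *v (P n *v x) = P n *v x"
  using IP unfolding invariant_projections_def by (simp add: matrix_vector_mul_assoc)
lemma V4: "1 \<le> m \<Longrightarrow> 1 \<le> n \<Longrightarrow> qv m (F m n *v x) = F m n *v qv n x"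
  unfolding qv_def by (simp add: V2 matrix_vector_mult_diff_distrib)
lemma V5a: "1 \<le> n \<Longrightarrow> qv n (P n *v x) = 0"
  unfolding qv_def by (simp add: V3)
lemma V5b: "1 \<le> n \<Longrightarrow> P n *v qv n x = 0"
  unfolding qv_def by (simp add: V3 matrix_vector_mult_diff_distrib)
lemma V5c: "1 \<le> n \<Longrightarrow> qv n (qv n x) = qv n x"
  using V5b unfolding qv_def by (simp add: matrix_vector_mult_diff_distrib)
lemma qv_scale: "qv n (c *\<^sub>R x) = c *\<^sub>R qv n x"
  unfolding qv_def by (simp add: matrix_vector_mult_scaleR scaleR_diff_right)
lemma qv_add: "qv n (x + y) = qv n x + qv n y"
  unfolding qv_def by (simp add: matrix_vector_right_distrib)

lemma h_scale: "h n (c *\<^sub>R x) k = \<bar>c\<bar> * h n x k"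
  unfolding h_def by (simp add: qv_scale matrix_vector_mult_scaleR isn_scale[OF isn] algebra_simps)

lemma h_add: "h n (x + y) k \<le> h n x k + h n y k"
proof -
  have w: "0 \<le> (real k / real n) powr lam" "0 \<le> (real n / real k) powr lam" "0 \<le> Rr (real k) (real n) powr (- a)"
    by auto
  have a1: "N (F k n *v (P n *v (x + y))) \<le> N (F k n *v (P n *v x)) + N (F k n *v (P n *v y))"
    by (simp add: matrix_vector_right_distrib isn_tri[OF isn])
  have a2: "N (F k n *v qv n (x + y)) \<le> N (F k n *v qv n x) + N (F k n *v qv n y)"
    by (simp add: qv_add matrix_vector_right_distrib isn_tri[OF isn])
  have a3: "N (F k n *v (x + y)) \<le> N (F k n *v x) + N (F k n *v y)"
    by (simp add: matrix_vector_right_distrib isn_tri[OF isn])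
  have b1: "N (F k n *v (P n *v (x + y))) * (real k / real n) powr lam \<le> N (F k n *v (P n *v x)) * (real k / real n) powr lam + N (F k n *v (P n *v y)) * (real k / real n) powr lam"
    using mult_right_mono[OF a1 w(1)] by (simp add: algebra_simps)
  have b2: "N (F k n *v qv n (x + y)) * (real n / real k) powr lam \<le> N (F k n *v qv n x) * (real n / real k) powr lam + N (F k n *v qv n y) * (real n / real k) powr lam"
    using mult_right_mono[OF a2 w(2)] by (simp add: algebra_simps)
  have b3: "N (F k n *v (x + y)) * Rr (real k) (real n) powr (- a) \<le> N (F k n *v x) * Rr (real k) (real n) powr (- a) + N (F k n *v y) * Rr (real k) (real n) powr (- a)"
    using mult_right_mono[OF a3 w(3)] by (simp add: algebra_simps)
  show ?thesis unfolding h_def using b1 b2 b3 by auto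
qed

lemma Ns_nonneg: "1 \<le> n \<Longrightarrow> 0 \<le> Ns n x"
  using Ns_lower Nnn order_trans by blast

lemma Ns_scale_le: "1 \<le> n \<Longrightarrow> Ns n (c *\<^sub>R x) \<le> \<bar>c\<bar> * Ns n x"
  by (intro Ns_least) (simp add: h_scale h_le_Ns mult_left_mono)

lemma Ns_norm: assumes n: "1 \<le> n" shows "is_norm (Ns n)"
  unfolding is_norm_def
proof (intro conjI allI)
  fix x show "0 \<le> Ns n x" using Ns_nonneg[OF n] .
next
  fix x show "Ns n x = 0 \<longleftrightarrow> x = 0"
  proof
    assume "Ns n x = 0"
    then have "N x \<le> 0" using Ns_lower[OF n, of x] by simp
    then show "x = 0" using Nnn[of x] isn_eq0[OF isn, of x] by simp
  next
    assume "x = 0"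
    then show "Ns n x = 0" using Ns_upper[OF n, of 0] Ns_nonneg[OF n, of 0] isn_0[OF isn] by simp
  qed
next
  fix c x show "Ns n (c *\<^sub>R x) = \<bar>c\<bar> * Ns n x"
  proof (cases "c = 0")
    case True
    then show ?thesis using Ns_upper[OF n, of 0] Ns_nonneg[OF n, of 0] isn_0[OF isn] by simp
  next
    case False
    have "Ns n x = Ns n ((1 / c) *\<^sub>R (c *\<^sub>R x))" using False by simp
    also have "\<dots> \<le> \<bar>1 / c\<bar> * Ns n (c *\<^sub>R x)" by (rule Ns_scale_le[OF n])
    finally have "\<bar>c\<bar> * Ns n x \<le> Ns n (c *\<^sub>R x)" using False by (simp add: field_simps)
    then show ?thesis using Ns_scale_le[OF n, of c x] by simp
  qed
next
  fix x y show "Ns n (x + y) \<le> Ns n x + Ns n y"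
    using h_add h_le_Ns[OF n] by (intro Ns_least) (meson add_mono order_trans)
qed

lemma E1: assumes "1 \<le> n" "n \<le> k"
  shows "N (F k n *v (P n *v x)) \<le> Ns n x * (real k / real n) powr (- lam)"
proof -
  have "N (F k n *v (P n *v x)) * (real k / real n) powr lam \<le> h n x k"
    unfolding h_def using assms Nnn by auto
  also have "\<dots> \<le> Ns n x" using assms by (intro h_le_Ns) auto
  finally show ?thesis using assms by (intro extr) auto
qed

lemma E2: assumes "1 \<le> k" "k \<le> n"
  shows "N (F k n *v qv n x) \<le> Ns n x * (real n / real k) powr (- lam)"
proof -
  have "N (F k n *v qv n x) * (real n / real k) powr lam \<le> h n x k"
    unfolding h_def using assms Nnn by auto
  also have "\<dots> \<le> Ns n x" using assms by (intro h_le_Ns) auto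
  finally show ?thesis using assms by (intro extr) auto
qed

lemma E3: assumes "1 \<le> n" "1 \<le> k"
  shows "N (F k n *v x) \<le> Ns n x * Rr (real k) (real n) powr a"
proof -
  have "N (F k n *v x) * Rr (real k) (real n) powr (- a) \<le> h n x k"
    unfolding h_def using assms Nnn by auto
  also have "\<dots> \<le> Ns n x" using assms by (intro h_le_Ns) auto
  finally show ?thesis using assms extr[of "Rr (real k) (real n)" _ "- a"] Rr_pos[of "real k" "real n"] by simp
qed

lemma E4: assumes "1 \<le> n" "1 \<le> k"
  shows "N (F k n *v (P n *v x)) \<le> (2 * Ns n x) * Rr (real k) (real n) powr a"
proof (cases "n \<le> k")
  case True
  have "N (F k n *v (P n *v x)) \<le> Ns n x * (real k / real n) powr (- lam)" using E1 assms True by auto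
  also have "\<dots> \<le> Ns n x * Rr (real k) (real n) powr a"
    using assms True lam al Ns_nonneg by (intro mult_left_mono small_le_Rr) auto
  also have "\<dots> \<le> (2 * Ns n x) * Rr (real k) (real n) powr a"
    using Ns_nonneg[OF assms(1)] by (intro mult_right_mono) auto
  finally show ?thesis .
next
  case False
  have e: "F k n *v (P n *v x) = F k n *v x - F k n *v qv n x"
    unfolding qv_def by (simp add: matrix_vector_mult_diff_distrib)
  have "N (F k n *v (P n *v x)) \<le> N (F k n *v x) + N (F k n *v qv n x)"
    unfolding e by (rule isn_diff[OF isn])
  also have "\<dots> \<le> Ns n x * Rr (real k) (real n) powr a + Ns n x * (real n / real k) powr (- lam)"
    using E3[OF assms] E2[of k n x] assms False by (intro add_mono) auto
  also have "Ns n x * (real n / real k) powr (- lam) \<le> Ns n x * Rr (real k) (real n) powr a"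
    using assms False lam al Ns_nonneg by (intro mult_left_mono small_le_Rr) auto
  finally show ?thesis by (simp add: algebra_simps)
qed

lemma E5: assumes "1 \<le> n" "1 \<le> k"
  shows "N (F k n *v qv n x) \<le> (2 * Ns n x) * Rr (real k) (real n) powr a"
proof (cases "k \<le> n")
  case True
  have "N (F k n *v qv n x) \<le> Ns n x * (real n / real k) powr (- lam)" using E2 assms True by auto
  also have "\<dots> \<le> Ns n x * Rr (real k) (real n) powr a"
    using assms True lam al Ns_nonneg by (intro mult_left_mono small_le_Rr) auto
  also have "\<dots> \<le> (2 * Ns n x) * Rr (real k) (real n) powr a"
    using Ns_nonneg[OF assms(1)] by (intro mult_right_mono) auto
  finally show ?thesis .
next
  case False
  have e: "F k n *v qv n x = F k n *v x - F k n *v (P n *v x)"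
    unfolding qv_def by (simp add: matrix_vector_mult_diff_distrib)
  have "N (F k n *v qv n x) \<le> N (F k n *v x) + N (F k n *v (P n *v x))"
    unfolding e by (rule isn_diff[OF isn])
  also have "\<dots> \<le> Ns n x * Rr (real k) (real n) powr a + Ns n x * (real k / real n) powr (- lam)"
    using E3[OF assms] E1[of n k x] assms False by (intro add_mono) auto
  also have "Ns n x * (real k / real n) powr (- lam) \<le> Ns n x * Rr (real k) (real n) powr a"
    using assms False lam al Ns_nonneg by (intro mult_left_mono small_le_Rr) auto
  finally show ?thesis by (simp add: algebra_simps)
qed


lemma T1: assumes n: "1 \<le> n" and nm: "n \<le> m"
  shows "Ns m (F m n *v (P n *v x)) \<le> 3 * (real m / real n) powr (- lam) * Ns n x"
proof (rule Ns_least)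
  fix k :: nat assume k: "1 \<le> k"
  have m: "1 \<le> m" using n nm by simp
  define y where "y = F m n *v (P n *v x)"
  define S where "S = Ns n x"
  define D where "D = (real m / real n) powr (- lam)"
  have S0: "0 \<le> S" unfolding S_def using Ns_nonneg[OF n] .
  have D0: "0 \<le> D" unfolding D_def by simp
  have Fy: "F k m *v y = F k n *v (P n *v x)" unfolding y_def using k m n by (simp add: V1)
  have Py: "P m *v y = y" unfolding y_def using m n by (simp add: V2 V3)
  have Qy: "qv m y = 0" unfolding y_def using m n by (simp add: V4 V5a)
  have t1: "(if m \<le> k then N (F k m *v (P m *v y)) * (real k / real m) powr lam else 0) \<le> S * D"
  proof (cases "m \<le> k")
    case True
    have "N (F k n *v (P n *v x)) * (real k / real m) powr lam \<le> S * D"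
      unfolding D_def S_def
      by (rule chn[OF E1[OF n] _ Ns_nonneg[OF n]]) (use True nm n in \<open>auto intro!: sA[OF lam al]\<close>)
    then show ?thesis using True Py Fy by simp
  qed (use S0 D0 in simp)
  have t2: "(if k \<le> m then N (F k m *v qv m y) * (real m / real k) powr lam else 0) = 0"
    using Qy isn_0[OF isn] by simp
  have t3: "N (F k m *v y) * Rr (real k) (real m) powr (- a) \<le> 2 * S * D"
  proof -
    consider "m \<le> k" | "n \<le> k" "k \<le> m" | "k < n" by linarith
    then show ?thesis
    proof cases
      case 1
      have "N (F k n *v (P n *v x)) * Rr (real k) (real m) powr (- a) \<le> S * D"
        unfolding D_def S_def
        by (rule chn[OF E1[OF n] _ Ns_nonneg[OF n]]) (use 1 nm n in \<open>auto intro!: sB[OF lam al]\<close>)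
      moreover have "S * D \<le> 2 * S * D" using mult_nonneg_nonneg[OF S0 D0] by (simp add: mult.commute)
      ultimately show ?thesis unfolding Fy by linarith
    next
      case 2
      have "N (F k n *v (P n *v x)) * Rr (real k) (real m) powr (- a) \<le> S * D"
        unfolding D_def S_def
        by (rule chn[OF E1[OF n] _ Ns_nonneg[OF n]]) (use 2 nm n in \<open>auto intro!: sC[OF lam al]\<close>)
      moreover have "S * D \<le> 2 * S * D" using mult_nonneg_nonneg[OF S0 D0] by (simp add: mult.commute)
      ultimately show ?thesis unfolding Fy by linarith
    next
      case 3
      have "N (F k n *v (P n *v x)) * Rr (real k) (real m) powr (- a) \<le> (2 * S) * D"
        unfolding D_def S_def
        by (rule chn[OF E4[OF n k]]) (use 3 nm n k Ns_nonneg[OF n] in \<open>auto intro!: sD[OF lam al]\<close>)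
      then show ?thesis using Fy by simp
    qed
  qed
  have "h m y k \<le> S * D + 0 + 2 * S * D" unfolding h_def using t1 t2 t3 by linarith
  then show "h m (F m n *v (P n *v x)) k \<le> 3 * (real m / real n) powr (- lam) * Ns n x"
    unfolding y_def S_def D_def by (simp add: algebra_simps)
qed


lemma T2: assumes n: "1 \<le> n" and nm: "n \<le> m"
  shows "Ns n (F n m *v qv m x) \<le> 3 * (real m / real n) powr (- lam) * Ns m x"
proof (rule Ns_least)
  fix k :: nat assume k: "1 \<le> k"
  have m: "1 \<le> m" using n nm by simp
  define y where "y = F n m *v qv m x"
  define S where "S = Ns m x"
  define D where "D = (real m / real n) powr (- lam)"
  have S0: "0 \<le> S" unfolding S_def using Ns_nonneg[OF m] .
  have D0: "0 \<le> D" unfolding D_def by simp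
  have SD: "S * D \<le> 2 * S * D" using mult_nonneg_nonneg[OF S0 D0] by (simp add: mult.commute)
  have Fy: "F k n *v y = F k m *v qv m x" unfolding y_def using k m n by (simp add: V1)
  have Py: "P n *v y = 0" unfolding y_def using m n by (simp add: V2 V5b)
  have Qy: "qv n y = y" unfolding y_def using m n by (simp add: V4 V5c)
  have t1: "(if n \<le> k then N (F k n *v (P n *v y)) * (real k / real n) powr lam else 0) = 0"
    using Py isn_0[OF isn] by simp
  have t2: "(if k \<le> n then N (F k n *v qv n y) * (real n / real k) powr lam else 0) \<le> S * D"
  proof (cases "k \<le> n")
    case True
    have "N (F k m *v qv m x) * (real n / real k) powr lam \<le> S * D"
      unfolding D_def S_def
      by (rule chn[OF E2[OF k] _ Ns_nonneg[OF m]]) (use True nm k in \<open>auto intro!: sE[OF lam al]\<close>)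
    then show ?thesis using True Qy Fy by simp
  qed (use S0 D0 in simp)
  have t3: "N (F k n *v y) * Rr (real k) (real n) powr (- a) \<le> 2 * S * D"
  proof -
    consider "k \<le> n" | "n \<le> k" "k \<le> m" | "m < k" by linarith
    then show ?thesis
    proof cases
      case 1
      have "N (F k m *v qv m x) * Rr (real k) (real n) powr (- a) \<le> S * D"
        unfolding D_def S_def
        by (rule chn[OF E2[OF k] _ Ns_nonneg[OF m]]) (use 1 nm k in \<open>auto intro!: sF[OF lam al]\<close>)
      with SD show ?thesis unfolding Fy by linarith
    next
      case 2
      have "N (F k m *v qv m x) * Rr (real k) (real n) powr (- a) \<le> S * D"
        unfolding D_def S_def
        by (rule chn[OF E2[OF k] _ Ns_nonneg[OF m]]) (use 2 nm n in \<open>auto intro!: sG[OF lam al]\<close>)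
      with SD show ?thesis unfolding Fy by linarith
    next
      case 3
      have "N (F k m *v qv m x) * Rr (real k) (real n) powr (- a) \<le> (2 * S) * D"
        unfolding D_def S_def
        by (rule chn[OF E5[OF m k]]) (use 3 nm n k Ns_nonneg[OF m] in \<open>auto intro!: sH[OF lam al]\<close>)
      then show ?thesis unfolding Fy by simp
    qed
  qed
  have "h n y k \<le> 0 + S * D + 2 * S * D" unfolding h_def using t1 t2 t3 by linarith
  then show "h n (F n m *v qv m x) k \<le> 3 * (real m / real n) powr (- lam) * Ns m x"
    unfolding y_def S_def D_def by (simp add: algebra_simps)
qed

lemma T3: assumes n: "1 \<le> n" and nm: "n \<le> m"
  shows "Ns m (F m n *v x) \<le> 4 * (real m / real n) powr a * Ns n x"
proof (rule Ns_least)
  fix k :: nat assume k: "1 \<le> k"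
  have m: "1 \<le> m" using n nm by simp
  define y where "y = F m n *v x"
  define S where "S = Ns n x"
  define D where "D = (real m / real n) powr a"
  have S0: "0 \<le> S" unfolding S_def using Ns_nonneg[OF n] .
  have D0: "0 \<le> D" unfolding D_def by simp
  have SD: "S * D \<le> 2 * S * D" using mult_nonneg_nonneg[OF S0 D0] by (simp add: mult.commute)
  have Fy: "F k m *v y = F k n *v x" unfolding y_def using k m n by (simp add: V1)
  have Py: "F k m *v (P m *v y) = F k n *v (P n *v x)" unfolding y_def using k m n by (simp add: V1 V2)
  have Qy: "F k m *v qv m y = F k n *v qv n x" unfolding y_def using k m n by (simp add: V1 V4)
  have t1: "(if m \<le> k then N (F k m *v (P m *v y)) * (real k / real m) powr lam else 0) \<le> S * D"
  proof (cases "m \<le> k")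
    case True
    have "N (F k n *v (P n *v x)) * (real k / real m) powr lam \<le> S * D"
      unfolding D_def S_def
      by (rule chn[OF E1[OF n] _ Ns_nonneg[OF n]]) (use True nm n in \<open>auto intro!: sI[OF lam al]\<close>)
    then show ?thesis using True Py by simp
  qed (use S0 D0 in simp)
  have t2: "(if k \<le> m then N (F k m *v qv m y) * (real m / real k) powr lam else 0) \<le> 2 * S * D"
  proof -
    consider "k \<le> n" | "n \<le> k" "k \<le> m" | "m < k" by linarith
    then show ?thesis
    proof cases
      case 1
      have "N (F k n *v qv n x) * (real m / real k) powr lam \<le> S * D"
        unfolding D_def S_def
        by (rule chn[OF E2[OF k] _ Ns_nonneg[OF n]]) (use 1 nm k in \<open>auto intro!: sJ[OF lam al]\<close>)
      then have "N (F k n *v qv n x) * (real m / real k) powr lam \<le> 2 * S * D" using SD by linarith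
      then show ?thesis unfolding Qy using 1 nm by simp
    next
      case 2
      have "N (F k n *v qv n x) * (real m / real k) powr lam \<le> (2 * S) * D"
        unfolding D_def S_def
        by (rule chn[OF E5[OF n k]]) (use 2 nm n Ns_nonneg[OF n] in \<open>auto intro!: sK[OF lam al]\<close>)
      then show ?thesis unfolding Qy using 2 by auto
    next
      case 3
      then show ?thesis using SD S0 D0 by (simp add: mult_nonneg_nonneg)
    qed
  qed
  have t3: "N (F k m *v y) * Rr (real k) (real m) powr (- a) \<le> S * D"
  proof -
    have r: "Rr (real m) (real n) = real m / real n" using nm n by (intro Rr_ge) auto
    have "N (F k n *v x) * Rr (real k) (real m) powr (- a) \<le> S * D"
      unfolding D_def S_def
      using sL[OF lam al, where k="real k" and x="real n" and y="real m"] n m k r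
      by (intro chn[OF E3[OF n k] _ Ns_nonneg[OF n]]) auto
    then show ?thesis unfolding Fy .
  qed
  have "h m y k \<le> S * D + 2 * S * D + S * D" unfolding h_def using t1 t2 t3 by linarith
  then show "h m (F m n *v x) k \<le> 4 * (real m / real n) powr a * Ns n x"
    unfolding y_def S_def D_def by (simp add: algebra_simps)
qed

lemma T4: assumes n: "1 \<le> n" and nm: "n \<le> m"
  shows "Ns n (F n m *v x) \<le> 4 * (real m / real n) powr a * Ns m x"
proof (rule Ns_least)
  fix k :: nat assume k: "1 \<le> k"
  have m: "1 \<le> m" using n nm by simp
  define y where "y = F n m *v x"
  define S where "S = Ns m x"
  define D where "D = (real m / real n) powr a"
  have S0: "0 \<le> S" unfolding S_def using Ns_nonneg[OF m] .
  have D0: "0 \<le> D" unfolding D_def by simp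
  have SD: "S * D \<le> 2 * S * D" using mult_nonneg_nonneg[OF S0 D0] by (simp add: mult.commute)
  have Fy: "F k n *v y = F k m *v x" unfolding y_def using k m n by (simp add: V1)
  have Py: "F k n *v (P n *v y) = F k m *v (P m *v x)" unfolding y_def using k m n by (simp add: V1 V2)
  have Qy: "F k n *v qv n y = F k m *v qv m x" unfolding y_def using k m n by (simp add: V1 V4)
  have t1: "(if n \<le> k then N (F k n *v (P n *v y)) * (real k / real n) powr lam else 0) \<le> 2 * S * D"
  proof -
    consider "m \<le> k" | "n \<le> k" "k < m" | "k < n" by linarith
    then show ?thesis
    proof cases
      case 1
      have "N (F k m *v (P m *v x)) * (real k / real n) powr lam \<le> S * D"
        unfolding D_def S_def
        by (rule chn[OF E1[OF m] _ Ns_nonneg[OF m]]) (use 1 nm n in \<open>auto intro!: sM[OF lam al]\<close>)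
      then have "N (F k m *v (P m *v x)) * (real k / real n) powr lam \<le> 2 * S * D" using SD by linarith
      then show ?thesis unfolding Py using 1 nm by simp
    next
      case 2
      have "N (F k m *v (P m *v x)) * (real k / real n) powr lam \<le> (2 * S) * D"
        unfolding D_def S_def
        by (rule chn[OF E4[OF m k]]) (use 2 nm n Ns_nonneg[OF m] in \<open>auto intro!: sN[OF lam al]\<close>)
      then show ?thesis unfolding Py using 2 by auto
    next
      case 3
      then show ?thesis using SD S0 D0 by (simp add: mult_nonneg_nonneg)
    qed
  qed
  have t2: "(if k \<le> n then N (F k n *v qv n y) * (real n / real k) powr lam else 0) \<le> S * D"
  proof (cases "k \<le> n")
    case True
    have "N (F k m *v qv m x) * (real n / real k) powr lam \<le> S * D"
      unfolding D_def S_def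
      by (rule chn[OF E2[OF k] _ Ns_nonneg[OF m]]) (use True nm k in \<open>auto intro!: sO[OF lam al]\<close>)
    then show ?thesis using True Qy by simp
  qed (use S0 D0 in simp)
  have t3: "N (F k n *v y) * Rr (real k) (real n) powr (- a) \<le> S * D"
  proof -
    have r: "Rr (real n) (real m) = real m / real n" using nm n by (intro Rr_le) auto
    have "N (F k m *v x) * Rr (real k) (real n) powr (- a) \<le> S * D"
      unfolding D_def S_def
      using sL[OF lam al, where k="real k" and x="real m" and y="real n"] n m k r
      by (intro chn[OF E3[OF m k] _ Ns_nonneg[OF m]]) auto
    then show ?thesis unfolding Fy .
  qed
  have "h n y k \<le> 2 * S * D + S * D + S * D" unfolding h_def using t1 t2 t3 by linarith
  then show "h n (F n m *v x) k \<le> 4 * (real m / real n) powr a * Ns m x"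
    unfolding y_def S_def D_def by (simp add: algebra_simps)
qed

end


lemma transfer_bound:
  assumes "is_norm N" "\<And>x. N x \<le> Nsi x" "\<And>x. Nsj x \<le> CC * N x"
    "\<And>x. Nsi (T *v x) \<le> c * Nsj x" "0 \<le> c" "0 \<le> CC"
  shows "op_norm N T \<le> c * CC"
proof (rule op_norm_le[OF assms(1)])
  show "0 \<le> c * CC" using assms by simp
  fix x
  have "N (T *v x) \<le> Nsi (T *v x)" by (rule assms(2))
  also have "\<dots> \<le> c * Nsj x" by (rule assms(4))
  also have "\<dots> \<le> c * (CC * N x)" using assms by (intro mult_left_mono) auto
  finally show "N (T *v x) \<le> c * CC * N x" by (simp add: mult.assoc)
qed

theorem proposition2p1:
  fixes A :: "nat \<Rightarrow> real ^ 'd ^ 'd" and N :: "real ^ 'd \<Rightarrow> real"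
  assumes "\<And>n. n \<ge> 1 \<Longrightarrow> invertible (A n)"
    and "is_norm N"
  shows "nonuniform_strong_poly_dichotomy A N \<longleftrightarrow>
    (\<exists>Ns :: nat \<Rightarrow> real ^ 'd \<Rightarrow> real.
       (\<forall>n\<ge>1. is_norm (Ns n)) \<and> strong_poly_dichotomy_wrt A Ns \<and>
       (\<exists>C \<delta>. C > 0 \<and> \<delta> \<ge> 0 \<and>
          (\<forall>n\<ge>1. \<forall>x. N x \<le> Ns n x \<and> Ns n x \<le> C * real n powr \<delta> * N x)))"
proof
  assume "nonuniform_strong_poly_dichotomy A N"
  then obtain K a lam eps P where K: "K > 0" and al: "a \<ge> lam" and lam: "lam > 0" and eps: "eps \<ge> 0"
    and IP: "invariant_projections A P"
    and H: "\<And>m n. 1 \<le> n \<and> n \<le> m \<longrightarrow>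
         op_norm N (cocycle A m n ** P n) \<le> K * (real m / real n) powr (-lam) * real n powr eps
       \<and> op_norm N (cocycle A n m ** (mat 1 - P m)) \<le> K * (real m / real n) powr (-lam) * real m powr eps
       \<and> op_norm N (cocycle A m n) \<le> K * (real m / real n) powr a * real n powr eps
       \<and> op_norm N (cocycle A n m) \<le> K * (real m / real n) powr a * real m powr eps"
    unfolding nonuniform_strong_poly_dichotomy_def by blast
  interpret X: nsd A N P K a lam eps
    using assms K al lam eps IP H by unfold_locales auto
  show "\<exists>Ns :: nat \<Rightarrow> real ^ 'd \<Rightarrow> real.
       (\<forall>n\<ge>1. is_norm (Ns n)) \<and> strong_poly_dichotomy_wrt A Ns \<and>
       (\<exists>C \<delta>. C > 0 \<and> \<delta> \<ge> 0 \<and>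
          (\<forall>n\<ge>1. \<forall>x. N x \<le> Ns n x \<and> Ns n x \<le> C * real n powr \<delta> * N x))"
  proof (intro exI[of _ X.Ns] conjI)
    show "\<forall>n\<ge>1. is_norm (X.Ns n)" using X.Ns_norm by auto
    show "\<exists>C \<delta>. C > 0 \<and> \<delta> \<ge> 0 \<and>
          (\<forall>n\<ge>1. \<forall>x. N x \<le> X.Ns n x \<and> X.Ns n x \<le> C * real n powr \<delta> * N x)"
      by (rule exI[of _ "3 * K"], rule exI[of _ eps]) (use X.Ns_lower X.Ns_upper K eps in auto)
    show "strong_poly_dichotomy_wrt A X.Ns"
      unfolding strong_poly_dichotomy_wrt_def
    proof (rule exI[of _ 4], rule exI[of _ a], rule exI[of _ lam], rule exI[of _ P], intro conjI allI impI)
      show "(4::real) > 0" by simp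
      show "a \<ge> lam" using al by simp
      show "lam > 0" using lam by simp
      show "invariant_projections A P" using IP by simp
      fix m n :: nat and x :: "real ^ 'd" assume mn: "1 \<le> n \<and> n \<le> m"
      then have n: "1 \<le> n" and nm: "n \<le> m" by auto
      have S0: "0 \<le> X.Ns n x" "0 \<le> X.Ns m x" using X.Ns_nonneg n nm by auto
      have D0: "0 \<le> (real m / real n) powr (- lam)" by simp
      have "X.Ns m (cocycle A m n ** P n *v x) \<le> 3 * (real m / real n) powr (- lam) * X.Ns n x"
        using X.T1[OF n nm, of x] by (simp add: matrix_vector_mul_assoc)
      also have "\<dots> \<le> 4 * (real m / real n) powr (- lam) * X.Ns n x"
        using S0 D0 by (intro mult_right_mono) auto
      finally show "X.Ns m (cocycle A m n ** P n *v x) \<le> 4 * (real m / real n) powr (- lam) * X.Ns n x" .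
      have e: "cocycle A n m ** (mat 1 - P m) *v x = cocycle A n m *v X.qv m x"
        unfolding X.qv_def
        by (simp add: matrix_vector_mul_assoc[symmetric] matrix_vector_mult_diff_rdistrib)
      have "X.Ns n (cocycle A n m ** (mat 1 - P m) *v x) \<le> 3 * (real m / real n) powr (- lam) * X.Ns m x"
        unfolding e using X.T2[OF n nm, of x] .
      also have "\<dots> \<le> 4 * (real m / real n) powr (- lam) * X.Ns m x"
        using S0 D0 by (intro mult_right_mono) auto
      finally show "X.Ns n (cocycle A n m ** (mat 1 - P m) *v x) \<le> 4 * (real m / real n) powr (- lam) * X.Ns m x" .
      show "X.Ns m (cocycle A m n *v x) \<le> 4 * (real m / real n) powr a * X.Ns n x"
        using X.T3[OF n nm] .
      show "X.Ns n (cocycle A n m *v x) \<le> 4 * (real m / real n) powr a * X.Ns m x"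
        using X.T4[OF n nm] .
    qed
  qed
next
  assume "\<exists>Ns :: nat \<Rightarrow> real ^ 'd \<Rightarrow> real.
       (\<forall>n\<ge>1. is_norm (Ns n)) \<and> strong_poly_dichotomy_wrt A Ns \<and>
       (\<exists>C \<delta>. C > 0 \<and> \<delta> \<ge> 0 \<and>
          (\<forall>n\<ge>1. \<forall>x. N x \<le> Ns n x \<and> Ns n x \<le> C * real n powr \<delta> * N x))"
  then obtain Ns :: "nat \<Rightarrow> real ^ 'd \<Rightarrow> real" and C \<delta> where
    D: "strong_poly_dichotomy_wrt A Ns" and C: "C > 0" "\<delta> \<ge> 0"
    and NC: "\<And>n x. 1 \<le> n \<Longrightarrow> N x \<le> Ns n x" "\<And>n x. 1 \<le> n \<Longrightarrow> Ns n x \<le> C * real n powr \<delta> * N x"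
    by blast
  from D obtain K a lam P where K: "K > 0" and al: "a \<ge> lam" and lam: "lam > 0"
    and IP: "invariant_projections A P"
    and H: "\<And>m n x. 1 \<le> n \<and> n \<le> m \<longrightarrow>
         Ns m (cocycle A m n ** P n *v x) \<le> K * (real m / real n) powr (-lam) * Ns n x
       \<and> Ns n (cocycle A n m ** (mat 1 - P m) *v x) \<le> K * (real m / real n) powr (-lam) * Ns m x
       \<and> Ns m (cocycle A m n *v x) \<le> K * (real m / real n) powr a * Ns n x
       \<and> Ns n (cocycle A n m *v x) \<le> K * (real m / real n) powr a * Ns m x"
    unfolding strong_poly_dichotomy_wrt_def by blast
  show "nonuniform_strong_poly_dichotomy A N"
    unfolding nonuniform_strong_poly_dichotomy_def
  proof (rule exI[of _ "K * C"], rule exI[of _ a], rule exI[of _ lam], rule exI[of _ \<delta>], rule exI[of _ P], intro conjI allI impI)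
    show "K * C > 0" "a \<ge> lam" "lam > 0" "\<delta> \<ge> 0" "invariant_projections A P"
      using K C al lam IP by auto
    fix m n :: nat assume mn: "1 \<le> n \<and> n \<le> m"
    then have n: "1 \<le> n" and m: "1 \<le> m" by auto
    have Kp: "0 \<le> K * (real m / real n) powr (- lam)" "0 \<le> K * (real m / real n) powr a"
      using K by auto
    have Cn: "0 \<le> C * real n powr \<delta>" "0 \<le> C * real m powr \<delta>" using C by auto
    have "op_norm N (cocycle A m n ** P n) \<le> (K * (real m / real n) powr (- lam)) * (C * real n powr \<delta>)"
      by (rule transfer_bound[OF assms(2) NC(1)[OF m] NC(2)[OF n]]) (use H mn Kp Cn in auto)
    then show "op_norm N (cocycle A m n ** P n) \<le> K * C * (real m / real n) powr (- lam) * real n powr \<delta>"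
      by (simp add: algebra_simps)
    have "op_norm N (cocycle A n m ** (mat 1 - P m)) \<le> (K * (real m / real n) powr (- lam)) * (C * real m powr \<delta>)"
      by (rule transfer_bound[OF assms(2) NC(1)[OF n] NC(2)[OF m]]) (use H mn Kp Cn in auto)
    then show "op_norm N (cocycle A n m ** (mat 1 - P m)) \<le> K * C * (real m / real n) powr (- lam) * real m powr \<delta>"
      by (simp add: algebra_simps)
    have "op_norm N (cocycle A m n) \<le> (K * (real m / real n) powr a) * (C * real n powr \<delta>)"
      by (rule transfer_bound[OF assms(2) NC(1)[OF m] NC(2)[OF n]]) (use H mn Kp Cn in auto)
    then show "op_norm N (cocycle A m n) \<le> K * C * (real m / real n) powr a * real n powr \<delta>"
      by (simp add: algebra_simps)
    have "op_norm N (cocycle A n m) \<le> (K * (real m / real n) powr a) * (C * real m powr \<delta>)"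
      by (rule transfer_bound[OF assms(2) NC(1)[OF n] NC(2)[OF m]]) (use H mn Kp Cn in auto)
    then show "op_norm N (cocycle A n m) \<le> K * C * (real m / real n) powr a * real m powr \<delta>"
      by (simp add: algebra_simps)
  qed
qed


end
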